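(* Let $\alpha,\beta$ be sets, $z\in\beta$, $\mathit{seq}:\beta\times\alpha\to\beta$ and $\oplus:\beta\times\beta\to\beta$. Let $\Gamma=\{\mathrm{foldl}(\mathit{seq},z,L) : L \text{ a finite list over }\alpha\}$. Assume $\oplus$ is associative on $\Gamma$ and $z$ is an identity of $\oplus$ on $\Gamma$. Then the following are equivalent: (1) for all finite lists $p_1,p_2$ over $\alpha$, $\mathrm{foldl}(\mathit{seq},z,p_1\mathbin{+\!\!+}p_2)=\mathrm{foldl}(\mathit{seq},z,p_1)\oplus\mathrm{foldl}(\mathit{seq},z,p_2)$; (2) for all $d\in\alpha$ and $e\in\Gamma$, $\mathit{seq}(e,d)=e\oplus\mathit{seq}(z,d)$.
   Context: Lists are finite; $\mathbin{+\!\!+}$ is list concatenation. For $f:B\times A\to B$, $b\in B$: $\mathrm{foldl}(f,b,[\,])=b$ and $\mathrm{foldl}(f,b,[x_1,\dots,x_n])=f(\cdots f(f(b,x_1),x_2)\cdots,x_n)$. *)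

theory Defs
  imports Main
begin

definition Gamma :: "('b \<Rightarrow> 'a \<Rightarrow> 'b) \<Rightarrow> 'b \<Rightarrow> 'b set" where
  "Gamma seq z = {foldl seq z L | L. True}"

end

theory Submission
  imports Defs
begin

lemma inG: "foldl seq z L \<in> Gamma seq z"
  unfolding Gamma_def by blast

theorem lemma2:
  fixes seq :: "'b \<Rightarrow> 'a \<Rightarrow> 'b" and oplus :: "'b \<Rightarrow> 'b \<Rightarrow> 'b" and z :: 'b
  assumes assoc: "\<forall>x\<in>Gamma seq z. \<forall>y\<in>Gamma seq z. \<forall>w\<in>Gamma seq z.
                    oplus (oplus x y) w = oplus x (oplus y w)"
    and ident: "\<forall>e\<in>Gamma seq z. oplus z e = e \<and> oplus e z = e"
  shows "(\<forall>p1 p2. foldl seq z (p1 @ p2) = oplus (foldl seq z p1) (foldl seq z p2))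
     \<longleftrightarrow> (\<forall>d. \<forall>e\<in>Gamma seq z. seq e d = oplus e (seq z d))"
proof
  assume H: "\<forall>p1 p2. foldl seq z (p1 @ p2) = oplus (foldl seq z p1) (foldl seq z p2)"
  show "\<forall>d. \<forall>e\<in>Gamma seq z. seq e d = oplus e (seq z d)"
  proof (intro allI ballI)
    fix d e assume "e \<in> Gamma seq z"
    then obtain L where e: "e = foldl seq z L" unfolding Gamma_def by blast
    show "seq e d = oplus e (seq z d)"
      using H[rule_format, of L "[d]"] e by simp
  qed
next
  assume H: "\<forall>d. \<forall>e\<in>Gamma seq z. seq e d = oplus e (seq z d)"
  show "\<forall>p1 p2. foldl seq z (p1 @ p2) = oplus (foldl seq z p1) (foldl seq z p2)"
  proof (intro allI)
    fix p1 p2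
    show "foldl seq z (p1 @ p2) = oplus (foldl seq z p1) (foldl seq z p2)"
    proof (induction p2 rule: rev_induct)
      case Nil
      then show ?case using ident inG[of seq z p1] by simp
    next
      case (snoc d p2)
      have s: "seq z d \<in> Gamma seq z" using inG[of seq z "[d]"] by simp
      have "foldl seq z (p1 @ p2 @ [d]) = seq (foldl seq z (p1 @ p2)) d" by simp
      also have "\<dots> = oplus (foldl seq z (p1 @ p2)) (seq z d)"
        using H inG[of seq z "p1 @ p2"] by blast
      also have "\<dots> = oplus (oplus (foldl seq z p1) (foldl seq z p2)) (seq z d)"
        using snoc by simp
      also have "\<dots> = oplus (foldl seq z p1) (oplus (foldl seq z p2) (seq z d))"
        using assoc inG[of seq z p1] inG[of seq z p2] s by blast
      also have "\<dots> = oplus (foldl seq z p1) (seq (foldl seq z p2) d)"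
        using H inG[of seq z p2] by metis
      finally show ?case by simp
    qed
  qed
qed

end
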